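(* Let $D,\chi,\varepsilon>0$, $a\ge 0$, $\beta>0$, $b=D\beta^2$, and assume $\frac{a\chi}{D\varepsilon}-\beta^2\le 0$. Then there are no $\rho_0>0$, $\phi_0>0$, $r_0>0$ and functions $\rho\in C^0[0,\infty)$, $\phi\in C^2[0,\infty)$ with $\rho\ge0$, $\phi\ge 0$, such that $\rho(0)=\rho_0$, $\phi(0)=\phi_0$, $\rho>0$ on $[0,r_0)$, $\rho\equiv 0$ on $[r_0,\infty)$, $\rho$ is differentiable on $(0,r_0)$ with $\varepsilon\rho\rho_r=\chi\rho\phi_r$ there, and $D\phi_{rr}+D\frac{\phi_r}{r}+a\rho-b\phi=0$ on $(0,\infty)$.
   Context: The system $\partial_r(\frac{\varepsilon}{2}\rho^2)=\chi\rho\phi_r$, $D\phi_{rr}+D\phi_r/r+a\rho-b\phi=0$ is the radially symmetric stationary form of a hyperbolic-parabolic chemotaxis model on $\mathbb{R}^2$ with pressure $p(\rho)=\frac{\varepsilon}{2}\rho^2$; $r=|x|$. *)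

theory Defs
  imports "HOL-Analysis.Analysis"
begin

definition C2_halfline :: "(real \<Rightarrow> real) \<Rightarrow> (real \<Rightarrow> real) \<Rightarrow> (real \<Rightarrow> real) \<Rightarrow> bool" where
  "C2_halfline f f1 f2 \<longleftrightarrow>
     (\<forall>x\<in>{0..}. (f has_real_derivative f1 x) (at x within {0..})) \<and>
     (\<forall>x\<in>{0..}. (f1 has_real_derivative f2 x) (at x within {0..})) \<and>
     continuous_on {0..} f2"

end

theory Submission
  imports Defs
begin

lemma at_pos: "(x::real) > 0 \<Longrightarrow> at x within {0..} = at x"
  by (rule at_within_interior) simp

theorem mainTheorem2:
  fixes D chi eps a \<beta> b :: real
  assumes "D > 0" "chi > 0" "eps > 0" "a \<ge> 0" "\<beta> > 0" "b = D * \<beta>\<^sup>2"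
    and "a * chi / (D * eps) - \<beta>\<^sup>2 \<le> 0"
  shows "\<not> (\<exists>(\<rho>0::real) (\<phi>0::real) (r0::real) (\<rho>::real \<Rightarrow> real) (\<phi>::real \<Rightarrow> real) \<phi>1 \<phi>2.
            \<rho>0 > 0 \<and> \<phi>0 > 0 \<and> r0 > 0 \<and>
            continuous_on {0..} \<rho> \<and> C2_halfline \<phi> \<phi>1 \<phi>2 \<and>
            (\<forall>r\<ge>0. \<rho> r \<ge> 0 \<and> \<phi> r \<ge> 0) \<and>
            \<rho> 0 = \<rho>0 \<and> \<phi> 0 = \<phi>0 \<and>
            (\<forall>r\<in>{0..<r0}. \<rho> r > 0) \<and>
            (\<forall>r\<ge>r0. \<rho> r = 0) \<and>
            (\<forall>r\<in>{0<..<r0}. \<rho> differentiable (at r) \<and>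
                eps * \<rho> r * deriv \<rho> r = chi * \<rho> r * \<phi>1 r) \<and>
            (\<forall>r>0. D * \<phi>2 r + D * \<phi>1 r / r + a * \<rho> r - b * \<phi> r = 0))"
proof
  assume "\<exists>(\<rho>0::real) (\<phi>0::real) (r0::real) (\<rho>::real \<Rightarrow> real) (\<phi>::real \<Rightarrow> real) \<phi>1 \<phi>2.
            \<rho>0 > 0 \<and> \<phi>0 > 0 \<and> r0 > 0 \<and>
            continuous_on {0..} \<rho> \<and> C2_halfline \<phi> \<phi>1 \<phi>2 \<and>
            (\<forall>r\<ge>0. \<rho> r \<ge> 0 \<and> \<phi> r \<ge> 0) \<and>
            \<rho> 0 = \<rho>0 \<and> \<phi> 0 = \<phi>0 \<and>
            (\<forall>r\<in>{0..<r0}. \<rho> r > 0) \<and>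
            (\<forall>r\<ge>r0. \<rho> r = 0) \<and>
            (\<forall>r\<in>{0<..<r0}. \<rho> differentiable (at r) \<and>
                eps * \<rho> r * deriv \<rho> r = chi * \<rho> r * \<phi>1 r) \<and>
            (\<forall>r>0. D * \<phi>2 r + D * \<phi>1 r / r + a * \<rho> r - b * \<phi> r = 0)"
  then obtain \<rho>0 \<phi>0 r0 \<rho> \<phi> \<phi>1 \<phi>2 where
    p0: "\<rho>0 > 0" "\<phi>0 > 0" "r0 > 0" and rc: "continuous_on {0..} \<rho>"
    and C2: "C2_halfline \<phi> \<phi>1 \<phi>2"
    and nn: "\<forall>r\<ge>0. \<rho> r \<ge> 0 \<and> \<phi> r \<ge> 0"
    and i0: "\<rho> 0 = \<rho>0" "\<phi> 0 = \<phi>0"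
    and pos: "\<forall>r\<in>{0..<r0}. \<rho> r > 0"
    and z: "\<forall>r\<ge>r0. \<rho> r = 0"
    and dr: "\<forall>r\<in>{0<..<r0}. \<rho> differentiable (at r) \<and>
                eps * \<rho> r * deriv \<rho> r = chi * \<rho> r * \<phi>1 r"
    and ode: "\<forall>r>0. D * \<phi>2 r + D * \<phi>1 r / r + a * \<rho> r - b * \<phi> r = 0"
    by blast
  have d1: "\<And>x. x \<ge> 0 \<Longrightarrow> (\<phi> has_real_derivative \<phi>1 x) (at x within {0..})"
   and d2: "\<And>x. x \<ge> 0 \<Longrightarrow> (\<phi>1 has_real_derivative \<phi>2 x) (at x within {0..})"
    using C2 unfolding C2_halfline_def by auto
  have d1a: "\<And>x. x > 0 \<Longrightarrow> (\<phi> has_real_derivative \<phi>1 x) (at x)"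
    using d1 at_pos by (metis less_imp_le)
  have d2a: "\<And>x. x > 0 \<Longrightarrow> (\<phi>1 has_real_derivative \<phi>2 x) (at x)"
    using d2 at_pos by (metis less_imp_le)
  have phic: "continuous_on {0..} \<phi>"
    using d1 by (meson atLeast_iff continuous_on_eq_continuous_within DERIV_continuous)
  have phi1c: "continuous_on {0..} \<phi>1"
    using d2 by (meson atLeast_iff continuous_on_eq_continuous_within DERIV_continuous)
  define h where "h r = eps * \<rho> r - chi * \<phi> r" for r
  have hc: "continuous_on {0..r0} h"
    unfolding h_def
    by (intro continuous_intros continuous_on_subset[OF rc] continuous_on_subset[OF phic]) auto
  have hd: "DERIV h x :> 0" if "0 < x" "x < r0" for x
  proof -
    have "\<rho> differentiable (at x)" and e: "eps * \<rho> x * deriv \<rho> x = chi * \<rho> x * \<phi>1 x"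
      using dr that by auto
    then have "DERIV \<rho> x :> deriv \<rho> x" using DERIV_deriv_iff_real_differentiable by blast
    then have "DERIV h x :> eps * deriv \<rho> x - chi * \<phi>1 x"
      unfolding h_def using d1a[OF that(1)] by (intro derivative_eq_intros) auto
    moreover have "\<rho> x > 0" using pos that by auto
    then have "eps * deriv \<rho> x = chi * \<phi>1 x" using e
      by (metis mult.assoc mult.commute mult_cancel_left less_irrefl)
    ultimately show ?thesis by simp
  qed
  have "h r0 = h 0" using DERIV_isconst2[OF p0(3) hc hd, of r0] p0 by auto
  then have k1: "chi * (\<phi>0 - \<phi> r0) = eps * \<rho>0"
    using z i0 unfolding h_def by (auto simp: algebra_simps)
  have hr: "eps * \<rho> r = chi * (\<phi> r - \<phi> r0)" if "0 \<le> r" "r \<le> r0" for r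
  proof -
    have "h r = h 0" using DERIV_isconst2[OF p0(3) hc hd, of r] that by auto
    with \<open>h r0 = h 0\<close> show ?thesis using z unfolding h_def by (auto simp: algebra_simps)
  qed
  have gt: "\<phi>0 > \<phi> r0"
  proof -
    have "eps * \<rho>0 > 0" using p0 assms by simp
    with k1 have "chi * (\<phi>0 - \<phi> r0) > 0" by simp
    with assms show ?thesis by (simp add: zero_less_mult_iff)
  qed
  have key: "a * chi / eps \<le> D * \<beta>\<^sup>2"
  proof -
    have "a * chi / (D * eps) \<le> \<beta>\<^sup>2" using assms by simp
    then have "a * chi / eps / D \<le> \<beta>\<^sup>2" by (simp add: mult.commute)
    then show ?thesis using assms by (simp add: divide_le_eq algebra_simps)
  qed
  define g where "g r = r * \<phi>1 r" for r
  have gnn: "0 \<le> g x" if "0 < x" "x < r0" for x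
  proof -
    have "g 0 \<le> g x"
    proof (rule DERIV_nonneg_imp_increasing_open[of 0 x])
      show "continuous_on {0..x} g" unfolding g_def
        by (intro continuous_intros continuous_on_subset[OF phi1c]) auto
      fix y assume y: "0 < y" "y < x"
      have "DERIV g y :> \<phi>1 y + y * \<phi>2 y"
        unfolding g_def using d2a[OF y(1)] by (intro derivative_eq_intros) auto
      moreover have "\<phi>1 y + y * \<phi>2 y \<ge> 0"
      proof -
        have o: "D * \<phi>2 y + D * \<phi>1 y / y + a * \<rho> y - b * \<phi> y = 0" using ode y by auto
        have "eps * \<rho> y = chi * (\<phi> y - \<phi> r0)" using hr y that by auto
        then have rr: "\<rho> y = chi / eps * (\<phi> y - \<phi> r0)" using assms by (simp add: field_simps)
        have pr: "\<phi> r0 \<ge> 0" "\<phi> y \<ge> 0" using nn p0 y by auto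
        have "a * \<rho> y = (a * chi / eps) * \<phi> y - (a*chi/eps) * \<phi> r0" unfolding rr by (simp add: algebra_simps)
        also have "\<dots> \<le> D * \<beta>\<^sup>2 * \<phi> y"
        proof -
          have "(a * chi / eps) * \<phi> y \<le> D * \<beta>\<^sup>2 * \<phi> y" using mult_right_mono[OF key pr(2)] .
          moreover have "(a*chi/eps) * \<phi> r0 \<ge> 0" using assms pr by simp
          ultimately show ?thesis by linarith
        qed
        finally have "a * \<rho> y \<le> b * \<phi> y" using assms by simp
        with o have "D * \<phi>2 y + D * \<phi>1 y / y \<ge> 0" by linarith
        then have "D * (\<phi>2 y + \<phi>1 y / y) \<ge> 0" by (simp add: algebra_simps)
        then have "\<phi>2 y + \<phi>1 y / y \<ge> 0" using assms by (simp add: zero_le_mult_iff)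
        then have "y * (\<phi>2 y + \<phi>1 y / y) \<ge> 0" using y by simp
        then show ?thesis using y by (simp add: algebra_simps)
      qed
      ultimately show "\<exists>d. DERIV g y :> d \<and> d \<ge> 0" by blast
    qed (use that in auto)
    then show ?thesis by (simp add: g_def)
  qed
  have "\<phi> 0 \<le> \<phi> r0"
  proof (rule DERIV_nonneg_imp_increasing_open[of 0 r0])
    show "continuous_on {0..r0} \<phi>" by (rule continuous_on_subset[OF phic]) auto
    fix y assume y: "0 < y" "y < r0"
    have "\<phi>1 y \<ge> 0" using gnn[OF y] y by (simp add: g_def zero_le_mult_iff)
    then show "\<exists>d. DERIV \<phi> y :> d \<and> d \<ge> 0" using d1a y by blast
  qed (use p0 in auto)
  with gt i0 show False by simp
qed

end
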